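(* Let $X$ be a list of $m$ inputs and $Y$ a disjoint list of $n$ inputs, with positive sizes; let $sum_x$ and $sum_y$ denote the sums of the sizes of the inputs of $X$ and of $Y$ respectively, and let $q$ be the reducer capacity, where $sum_x>q$ and $sum_y>q$. Then every X2Y mapping schema for $X$ and $Y$ with capacity $q$ has communication cost at least $\frac{2\cdot sum_x\cdot sum_y}{q}$ and uses at least $\frac{2\cdot sum_x\cdot sum_y}{q^2}$ reducers.
   Context: An X2Y mapping schema for lists $X$ and $Y$ with capacity $q$ is an assignment of the inputs of $X\cup Y$ to a collection of reducers (each input may go to several reducers) such that every reducer receives inputs of total size at most $q$ and for every $x\in X$ and $y\in Y$ there is a reducer receiving both. The communication cost is the sum over reducers of the total size of the inputs assigned to it. *)

theory Defs
  imports "HOL-Analysis.Analysis"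
begin

text \<open>Inputs of X are indexed by 0..<m with sizes wx i, inputs of Y by 0..<n with
sizes wy j (X and Y are disjoint lists; we keep the two index spaces separate).
A reducer is a pair (A, B) of the X-inputs A and the Y-inputs B assigned to it.\<close>

type_synonym reducer = "nat set \<times> nat set"

definition reducer_load :: "(nat \<Rightarrow> real) \<Rightarrow> (nat \<Rightarrow> real) \<Rightarrow> reducer \<Rightarrow> real" where
  "reducer_load wx wy r = (\<Sum>i\<in>fst r. wx i) + (\<Sum>j\<in>snd r. wy j)"

definition is_X2Y_schema ::
  "nat \<Rightarrow> nat \<Rightarrow> (nat \<Rightarrow> real) \<Rightarrow> (nat \<Rightarrow> real) \<Rightarrow> real \<Rightarrow> reducer list \<Rightarrow> bool" where
  "is_X2Y_schema m n wx wy q rs \<longleftrightarrow>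
     (\<forall>r\<in>set rs. fst r \<subseteq> {..<m} \<and> snd r \<subseteq> {..<n} \<and> reducer_load wx wy r \<le> q) \<and>
     (\<forall>i<m. \<forall>j<n. \<exists>r\<in>set rs. i \<in> fst r \<and> j \<in> snd r)"

definition communication_cost :: "(nat \<Rightarrow> real) \<Rightarrow> (nat \<Rightarrow> real) \<Rightarrow> reducer list \<Rightarrow> real" where
  "communication_cost wx wy rs = (\<Sum>r\<leftarrow>rs. reducer_load wx wy r)"

end

theory Submission
  imports Defs
begin

lemma sum_swap_list:
  "(\<Sum>i\<in>I. sum_list (map (f i) rs)) = sum_list (map (\<lambda>r. \<Sum>i\<in>I. f i r) rs)"
  by (induction rs) (auto simp: sum.distrib)

lemma mem_le_sum_list:
  fixes f :: "'a \<Rightarrow> real"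
  assumes "r \<in> set rs" "\<forall>x\<in>set rs. f x \<ge> 0"
  shows "f r \<le> sum_list (map f rs)"
  using assms
proof (induction rs)
  case Nil then show ?case by simp
next
  case (Cons a rs)
  have "sum_list (map f rs) \<ge> 0" using Cons.prems(2) by (intro sum_list_nonneg) auto
  then show ?case using Cons by auto
qed

lemma sum_le_sum_list:
  fixes f g :: "'a \<Rightarrow> real"
  assumes "\<forall>x\<in>set rs. f x \<le> g x"
  shows "sum_list (map f rs) \<le> sum_list (map g rs)"
  using assms by (induction rs) (auto intro: add_mono)

theorem theorem14:
  fixes m n :: nat and wx wy :: "nat \<Rightarrow> real" and q :: real and rs :: "reducer list"
  assumes "\<forall>i<m. wx i > 0" and "\<forall>j<n. wy j > 0"
    and "(\<Sum>i<m. wx i) > q" and "(\<Sum>j<n. wy j) > q"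
    and "is_X2Y_schema m n wx wy q rs"
  shows "communication_cost wx wy rs \<ge> 2 * (\<Sum>i<m. wx i) * (\<Sum>j<n. wy j) / q
       \<and> real (length rs) \<ge> 2 * (\<Sum>i<m. wx i) * (\<Sum>j<n. wy j) / q^2"
proof -
  define Sx where "Sx = (\<Sum>i<m. wx i)"
  define Sy where "Sy = (\<Sum>j<n. wy j)"
  define a where "a r = (\<Sum>i\<in>fst r. wx i)" for r :: reducer
  define b where "b r = (\<Sum>j\<in>snd r. wy j)" for r :: reducer
  have sch1: "\<forall>r\<in>set rs. fst r \<subseteq> {..<m} \<and> snd r \<subseteq> {..<n} \<and> a r + b r \<le> q"
    and sch2: "\<forall>i<m. \<forall>j<n. \<exists>r\<in>set rs. i \<in> fst r \<and> j \<in> snd r"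
    using assms(5) unfolding is_X2Y_schema_def reducer_load_def a_def b_def by auto
  have a0: "a r \<ge> 0" if "r \<in> set rs" for r
    using sch1 that assms(1) unfolding a_def by (intro sum_nonneg) (fastforce simp: less_imp_le)
  have b0: "b r \<ge> 0" if "r \<in> set rs" for r
    using sch1 that assms(2) unfolding b_def by (intro sum_nonneg) (fastforce simp: less_imp_le)
  have cost: "communication_cost wx wy rs = sum_list (map (\<lambda>r. a r + b r) rs)"
    unfolding communication_cost_def reducer_load_def a_def b_def by simp
  have Sx0: "Sx \<ge> 0" unfolding Sx_def using assms(1) by (intro sum_nonneg) auto
  have Sy0: "Sy \<ge> 0" unfolding Sy_def using assms(2) by (intro sum_nonneg) auto
  show ?thesis
  proof (cases "q > 0")
    case False
    have "m = 0 \<or> n = 0"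
    proof (rule ccontr)
      assume "\<not> (m = 0 \<or> n = 0)"
      hence "m>0" "n>0" by auto
      from sch2 \<open>m>0\<close> \<open>n>0\<close> obtain r' where r': "r' \<in> set rs" "0 \<in> fst r'" "0 \<in> snd r'" by blast
      have "a r' + b r' \<le> q" using sch1 r' by blast
      hence "a r' \<le> q" using b0[OF r'(1)] by linarith
      moreover have "a r' \<ge> wx 0"
        unfolding a_def using r' sch1 assms(1)
      proof (intro member_le_sum)
        show "finite (fst r')" using sch1 r'(1) finite_subset by blast
        fix x assume "x \<in> fst r' - {0}"
        hence "x < m" using sch1 r'(1) by blast
        thus "0 \<le> wx x" using assms(1) less_imp_le by blast
      qed (use r' in auto)
      moreover have "wx 0 > 0" using assms(1) \<open>m>0\<close> by blast
      ultimately show False using False by linarith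
    qed
    hence "Sx * Sy = 0" unfolding Sx_def Sy_def by auto
    moreover have "communication_cost wx wy rs \<ge> 0" unfolding cost
      using a0 b0 by (intro sum_list_nonneg) fastforce
    ultimately show ?thesis unfolding Sx_def[symmetric] Sy_def[symmetric] by auto
  next
    case True
    define ind where "ind i j r = (if i \<in> fst r \<and> j \<in> snd r then 1 else (0::real))" for i j :: nat and r :: reducer
    have ind1: "sum_list (map (ind i j) rs) \<ge> 1" if "i < m" "j < n" for i j
    proof -
      from sch2 that obtain r where r: "r \<in> set rs" "i \<in> fst r" "j \<in> snd r" by blast
      have "ind i j r \<le> sum_list (map (ind i j) rs)"
        by (rule mem_le_sum_list[OF r(1)]) (auto simp: ind_def)
      thus ?thesis using r by (simp add: ind_def)
    qed
    have "Sx * Sy = (\<Sum>i<m. \<Sum>j<n. wx i * wy j)"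
      unfolding Sx_def Sy_def by (simp add: sum_product)
    also have "\<dots> \<le> (\<Sum>i<m. \<Sum>j<n. wx i * wy j * sum_list (map (ind i j) rs))"
    proof (intro sum_mono)
      fix i j assume "i \<in> {..<m}" "j \<in> {..<n}"
      show "wx i * wy j \<le> wx i * wy j * sum_list (map (ind i j) rs)"
      proof -
        have "wx i * wy j > 0" using \<open>i \<in> {..<m}\<close> \<open>j \<in> {..<n}\<close> assms(1,2) by simp
        moreover have "sum_list (map (ind i j) rs) \<ge> 1" using ind1 \<open>i \<in> {..<m}\<close> \<open>j \<in> {..<n}\<close> by simp
        ultimately show ?thesis using mult_left_mono[of 1 "sum_list (map (ind i j) rs)" "wx i * wy j"] by simp
      qed
    qed
    also have "\<dots> = (\<Sum>i<m. \<Sum>j<n. sum_list (map (\<lambda>r. wx i * wy j * ind i j r) rs))"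
      by (simp add: sum_list_const_mult)
    also have "\<dots> = sum_list (map (\<lambda>r. \<Sum>i<m. \<Sum>j<n. wx i * wy j * ind i j r) rs)"
      by (simp add: sum_swap_list)
    also have "\<dots> = sum_list (map (\<lambda>r. a r * b r) rs)"
    proof (rule arg_cong[where f = sum_list], rule map_cong[OF refl])
      fix r assume r: "r \<in> set rs"
      have A: "fst r \<subseteq> {..<m}" and B: "snd r \<subseteq> {..<n}" using sch1 r by auto
      have "(\<Sum>i<m. \<Sum>j<n. wx i * wy j * ind i j r)
          = (\<Sum>i<m. (if i \<in> fst r then wx i else 0) * (\<Sum>j<n. if j \<in> snd r then wy j else 0))"
        unfolding ind_def sum_distrib_left by (intro sum.cong refl) auto
      also have "\<dots> = (\<Sum>i<m. if i \<in> fst r then wx i else 0) * (\<Sum>j<n. if j \<in> snd r then wy j else 0)"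
        by (simp add: sum_distrib_right)
      also have "\<dots> = a r * b r"
      proof -
        have "(\<Sum>i<m. if i \<in> fst r then wx i else 0) = sum wx ({..<m} \<inter> fst r)"
          by (rule sum.inter_restrict[OF finite_lessThan, symmetric])
        also have "{..<m} \<inter> fst r = fst r" using A by blast
        finally have 1: "(\<Sum>i<m. if i \<in> fst r then wx i else 0) = a r" unfolding a_def .
        have "(\<Sum>j<n. if j \<in> snd r then wy j else 0) = sum wy ({..<n} \<inter> snd r)"
          by (rule sum.inter_restrict[OF finite_lessThan, symmetric])
        also have "{..<n} \<inter> snd r = snd r" using B by blast
        finally have 2: "(\<Sum>j<n. if j \<in> snd r then wy j else 0) = b r" unfolding b_def .
        show ?thesis using 1 2 by simp
      qed
      finally show "(\<Sum>i<m. \<Sum>j<n. wx i * wy j * ind i j r) = a r * b r" .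
    qed
    finally have key: "Sx * Sy \<le> sum_list (map (\<lambda>r. a r * b r) rs)" .
    have c1: "2 * (a r * b r) \<le> q * (a r + b r)" if "r \<in> set rs" for r
    proof -
      have s: "a r + b r \<le> q" using sch1 that by blast
      hence aq: "a r \<le> q" and bq: "b r \<le> q" using a0[OF that] b0[OF that] by linarith+
      have "a r * b r \<le> a r * q" by (rule mult_left_mono[OF bq a0[OF that]])
      moreover have "a r * b r \<le> q * b r" by (rule mult_right_mono[OF aq b0[OF that]])
      ultimately have "a r * b r \<le> q * a r" "a r * b r \<le> q * b r" by (simp_all add: mult.commute)
      thus ?thesis by (simp add: algebra_simps)
    qed
    have c2: "2 * (a r * b r) \<le> q^2" if "r \<in> set rs" for r
    proof -
      have "a r + b r \<le> q" using sch1 that by auto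
      have "(a r + b r)^2 - 4 * (a r * b r) = (a r - b r)^2" by (simp add: power2_eq_square algebra_simps)
      hence "4 * (a r * b r) \<le> (a r + b r)^2" by (smt (verit) zero_le_power2)
      also have "\<dots> \<le> q^2" using \<open>a r + b r \<le> q\<close> a0[OF that] b0[OF that]
        by (intro power_mono) simp_all
      finally have "4 * (a r * b r) \<le> q^2" .
      moreover have "a r * b r \<ge> 0" using a0[OF that] b0[OF that] by simp
      ultimately show ?thesis by linarith
    qed
    have "2 * Sx * Sy \<le> sum_list (map (\<lambda>r. q * (a r + b r)) rs)"
      using key sum_le_sum_list[of rs "\<lambda>r. 2 * (a r * b r)" "\<lambda>r. q * (a r + b r)"] c1
      by (simp add: sum_list_const_mult)
    hence "2 * Sx * Sy \<le> q * communication_cost wx wy rs"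
      using cost by (simp add: sum_list_const_mult)
    hence g1: "2 * Sx * Sy / q \<le> communication_cost wx wy rs"
      using True by (simp add: divide_le_eq mult.commute)
    have "2 * Sx * Sy \<le> sum_list (map (\<lambda>r. q^2) rs)"
      using key sum_le_sum_list[of rs "\<lambda>r. 2 * (a r * b r)" "\<lambda>r. q^2"] c2
      by (simp add: sum_list_const_mult)
    hence "2 * Sx * Sy \<le> real (length rs) * q^2"
      by (simp add: sum_list_triv)
    hence g2: "2 * Sx * Sy / q^2 \<le> real (length rs)"
      using True by (simp add: divide_le_eq)
    show ?thesis using g1 g2 Sx_def Sy_def by simp
  qed
qed

end
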